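(* Assume that for every $j\in J$ the subspace $Y^\perp$ is not contained in the hyperplane $\{p_j=0\}$, and that the critical set $C_{\mathcal A,a}$ is nonempty. Then the map $$\Psi_{\mathcal A,a}:U(\mathcal A)\to\mathbb C^n\times(\mathbb C^n)^*,\qquad (x,u)\mapsto\Big(x,\ \frac{\partial\Phi_{\mathcal A,a}}{\partial z_1}(x,u),\dots,\frac{\partial\Phi_{\mathcal A,a}}{\partial z_n}(x,u)\Big)=\Big(x,\frac{a_1}{f_1(x,u)},\dots,\frac{a_n}{f_n(x,u)}\Big),$$ restricted to $C_{\mathcal A,a}$, is a diffeomorphism of $C_{\mathcal A,a}$ onto $L_{Y,a}$.
   Context: Let $0<k<n$, $J=\{1,\dots,n\}$. On $\mathbb C^k$ (coordinates $t$) fix nonzero linear functions $g_j=b^1_jt_1+\dots+b^k_jt_k$, $j\in J$, spanning $(\mathbb C^k)^*$. On $\mathbb C^n\times\mathbb C^k$ (coordinates $z,t$) let $f_j=g_j+z_j$, $H_j=\{f_j=0\}$, and $U(\mathcal A)$ the complement of $\bigcup_jH_j$. Fix $a\in(\mathbb C^\times)^n$, $\Phi_{\mathcal A,a}=\sum_ja_j\log f_j$, and $C_{\mathcal A,a}=\{(x,u)\in U(\mathcal A):\partial\Phi_{\mathcal A,a}/\partial t_i(x,u)=0,\ i=1,\dots,k\}$, where $\partial\Phi_{\mathcal A,a}/\partial t_i=\sum_jb^i_ja_j/f_j$. $Y\subset\mathbb C^n$ is the $k$-dimensional subspace spanned by $b^i=(b^i_1,\dots,b^i_n)$, $i=1,\dots,k$.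 $\mathbb C^n$ has coordinates $q_1,\dots,q_n$ and $(\mathbb C^n)^*$ has dual coordinates $p_1,\dots,p_n$; $Y^\perp\subset(\mathbb C^n)^*$ is the annihilator of $Y$. With $r_a(q,p)=(q_1+a_1/p_1,\dots,q_n+a_n/p_n,p)$ (defined where all $p_j\ne0$), $L_{Y,a}=r_a(Y\times Y^\perp)$, the image of the points of $Y\times Y^\perp$ with all $p_j\neq 0$. *)

theory Defs
  imports "HOL-Analysis.Analysis"
begin

text \<open>Index set J = type 'n (CARD('n) = n); coordinates t of C^k indexed by type 'k.
  The coefficient matrix B has entries B $ j $ i = b^i_j.\<close>

definition gfun :: "complex^'k^'n \<Rightarrow> 'n \<Rightarrow> complex^'k \<Rightarrow> complex" where
  "gfun B j t = (\<Sum>i\<in>UNIV. B $ j $ i * t $ i)"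

definition ffun :: "complex^'k^'n \<Rightarrow> 'n \<Rightarrow> ((complex^'n) \<times> (complex^'k)) \<Rightarrow> complex" where
  "ffun B j zt = gfun B j (snd zt) + fst zt $ j"

definition g_span_dual :: "complex^'k^'n \<Rightarrow> bool" where
  "g_span_dual B \<longleftrightarrow> (\<forall>c::complex^'k. \<exists>lam::complex^'n.
      \<forall>t. (\<Sum>i\<in>UNIV. c $ i * t $ i) = (\<Sum>j\<in>UNIV. lam $ j * gfun B j t))"

definition U_A :: "complex^'k^'n \<Rightarrow> ((complex^'n) \<times> (complex^'k)) set" where
  "U_A B = {zt. \<forall>j. ffun B j zt \<noteq> 0}"

definition crit_set :: "complex^'k^'n \<Rightarrow> complex^'n \<Rightarrow> ((complex^'n) \<times> (complex^'k)) set" where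
  "crit_set B a = {xu \<in> U_A B. \<forall>i. (\<Sum>j\<in>UNIV. B $ j $ i * a $ j / ffun B j xu) = 0}"

definition Y_sp :: "complex^'k^'n \<Rightarrow> (complex^'n) set" where
  "Y_sp B = {q. \<exists>t::complex^'k. q = (\<chi> j. \<Sum>i\<in>UNIV. t $ i * B $ j $ i)}"

definition Y_perp :: "complex^'k^'n \<Rightarrow> (complex^'n) set" where
  "Y_perp B = {p. \<forall>q\<in>Y_sp B. (\<Sum>j\<in>UNIV. p $ j * q $ j) = 0}"

definition r_map :: "complex^'n \<Rightarrow> ((complex^'n) \<times> (complex^'n)) \<Rightarrow> ((complex^'n) \<times> (complex^'n))" where
  "r_map a qp = ((\<chi> j. fst qp $ j + a $ j / snd qp $ j), snd qp)"

definition L_Ya :: "complex^'k^'n \<Rightarrow> complex^'n \<Rightarrow> ((complex^'n) \<times> (complex^'n)) set" where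
  "L_Ya B a = r_map a ` {(q, p). q \<in> Y_sp B \<and> p \<in> Y_perp B \<and> (\<forall>j. p $ j \<noteq> 0)}"

definition Psi_map :: "complex^'k^'n \<Rightarrow> complex^'n \<Rightarrow> ((complex^'n) \<times> (complex^'k)) \<Rightarrow> ((complex^'n) \<times> (complex^'n))" where
  "Psi_map B a xu = (fst xu, \<chi> j. a $ j / ffun B j xu)"

text \<open>Real C^\<infinity> on an open set: derivatives of every order exist (Frechet),
  D vs is the iterated derivative applied to the direction list vs.\<close>
definition smooth_on :: "'a::real_normed_vector set \<Rightarrow> ('a \<Rightarrow> 'b::real_normed_vector) \<Rightarrow> bool" where
  "smooth_on T f \<longleftrightarrow> (\<exists>D :: 'a list \<Rightarrow> 'a \<Rightarrow> 'b.
      (\<forall>x\<in>T. D [] x = f x) \<and>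
      (\<forall>vs. \<forall>x\<in>T. (D vs has_derivative (\<lambda>h. D (h # vs) x)) (at x)))"

definition smooth_map_on :: "'a::real_normed_vector set \<Rightarrow> ('a \<Rightarrow> 'b::real_normed_vector) \<Rightarrow> bool" where
  "smooth_map_on S f \<longleftrightarrow> (\<forall>x\<in>S. \<exists>T g. open T \<and> x \<in> T \<and> smooth_on T g \<and> (\<forall>y\<in>S \<inter> T. f y = g y))"

definition diffeomorphism_onto :: "('a::real_normed_vector \<Rightarrow> 'b::real_normed_vector) \<Rightarrow> 'a set \<Rightarrow> 'b set \<Rightarrow> bool" where
  "diffeomorphism_onto f S T \<longleftrightarrow> bij_betw f S T \<and> smooth_map_on S f \<and> smooth_map_on T (inv_into S f)"

end

theory Submission imports Defs "HOL-Computational_Algebra.Polynomial"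
begin

definition dstep :: "('a::real_normed_vector \<Rightarrow> 'b::real_normed_vector) set \<Rightarrow> 'a set \<Rightarrow> ('a \<Rightarrow> 'b) \<Rightarrow> 'a \<Rightarrow> 'a \<Rightarrow> 'b" where
  "dstep F T f = (SOME G. (\<forall>h. G h \<in> F) \<and> (\<forall>x\<in>T. (f has_derivative (\<lambda>h. G h x)) (at x)))"

primrec Dit :: "('a::real_normed_vector \<Rightarrow> 'b::real_normed_vector) set \<Rightarrow> 'a set \<Rightarrow> ('a \<Rightarrow> 'b) \<Rightarrow> 'a list \<Rightarrow> 'a \<Rightarrow> 'b" where
  "Dit F T f [] = f"
| "Dit F T f (h # vs) = dstep F T (Dit F T f vs) h"

lemma closed_class_smooth:
  assumes cl: "\<And>f. f \<in> F \<Longrightarrow> \<exists>G. (\<forall>h. G h \<in> F) \<and> (\<forall>x\<in>T. (f has_derivative (\<lambda>h. G h x)) (at x))"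
    and f: "f \<in> F"
  shows "smooth_on T f"
proof -
  have step: "(\<forall>h. dstep F T g h \<in> F) \<and> (\<forall>x\<in>T. (g has_derivative (\<lambda>h. dstep F T g h x)) (at x))"
    if "g \<in> F" for g
    unfolding dstep_def by (rule someI_ex[OF cl[OF that]])
  have mem: "Dit F T f vs \<in> F" for vs
    by (induction vs) (use f step in auto)
  show ?thesis unfolding smooth_on_def
    by (rule exI[of _ "Dit F T f"]) (use step[OF mem] in auto)
qed

definition RC :: "('i::finite \<Rightarrow> 'a::real_normed_vector \<Rightarrow> complex) \<Rightarrow> ('i \<Rightarrow> complex \<Rightarrow> 'b::real_normed_vector) \<Rightarrow> ('a \<Rightarrow> 'b) set" where
  "RC l E = {f. \<exists>L c P. bounded_linear L \<and> f = (\<lambda>z. L z + c + (\<Sum>j\<in>UNIV. E j (poly (P j) (inverse (l j z)))))}"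

lemma poly_inv_deriv:
  fixes l :: "'a::real_normed_vector \<Rightarrow> complex"
  assumes l: "bounded_linear l" and E: "bounded_linear E" and nz: "l x \<noteq> 0"
  shows "((\<lambda>z. E (poly P (inverse (l z)))) has_derivative
           (\<lambda>h. E (poly ([:0, 0, - l h:] * pderiv P) (inverse (l x))))) (at x)"
proof -
  let ?w = "l x"
  have d1: "((\<lambda>w. poly P (inverse w)) has_field_derivative
        (poly (pderiv P) (inverse ?w) * (- (inverse ?w * inverse ?w)))) (at ?w)"
    using DERIV_chain2[OF poly_DERIV DERIV_inverse[OF nz], of P]
    by (simp add: power2_eq_square)
  have d2: "((\<lambda>z. poly P (inverse (l z))) has_derivative
        (\<lambda>h. poly (pderiv P) (inverse ?w) * (- (inverse ?w * inverse ?w)) * l h)) (at x)"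
    using diff_chain_at[OF bounded_linear_imp_has_derivative[OF l] d1[unfolded has_field_derivative_def]]
    by (simp add: o_def mult.commute)
  show ?thesis
    by (rule has_derivative_eq_rhs[OF bounded_linear.has_derivative[OF E d2]])
       (auto simp: fun_eq_iff algebra_simps power2_eq_square)
qed

lemma RC_closed:
  assumes l: "\<And>j. bounded_linear (l j)" and E: "\<And>j. bounded_linear (E j)"
    and nz: "\<And>x j. x \<in> T \<Longrightarrow> l j x \<noteq> 0" and f: "f \<in> RC l E"
  shows "\<exists>G. (\<forall>h. G h \<in> RC l E) \<and> (\<forall>x\<in>T. (f has_derivative (\<lambda>h. G h x)) (at x))"
proof -
  obtain L c P where L: "bounded_linear L" and fe: "f = (\<lambda>z. L z + c + (\<Sum>j\<in>UNIV. E j (poly (P j) (inverse (l j z)))))"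
    using f unfolding RC_def by blast
  define G where "G = (\<lambda>h z. (\<lambda>_. 0) z + L h + (\<Sum>j\<in>UNIV. E j (poly ([:0, 0, - l j h:] * pderiv (P j)) (inverse (l j z)))))"
  have "G h \<in> RC l E" for h
    unfolding RC_def G_def by (rule CollectI, rule exI[of _ "\<lambda>_. 0"], rule exI[of _ "L h"], rule exI[of _ "\<lambda>j. [:0, 0, - l j h:] * pderiv (P j)"]) simp
  moreover have "(f has_derivative (\<lambda>h. G h x)) (at x)" if x: "x \<in> T" for x
  proof -
    have "((\<lambda>z. L z + c + (\<Sum>j\<in>UNIV. E j (poly (P j) (inverse (l j z))))) has_derivative
          (\<lambda>h. L h + 0 + (\<Sum>j\<in>UNIV. E j (poly ([:0, 0, - l j h:] * pderiv (P j)) (inverse (l j x)))))) (at x)"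
      by (intro has_derivative_add has_derivative_sum bounded_linear_imp_has_derivative[OF L]
            has_derivative_const poly_inv_deriv l E nz x)
    then show ?thesis unfolding fe G_def by (simp add: add.commute)
  qed
  ultimately show ?thesis by blast
qed

lemma RC_smooth:
  assumes "\<And>j. bounded_linear (l j)" "\<And>j. bounded_linear (E j)"
    "\<And>x j. x \<in> T \<Longrightarrow> l j x \<noteq> 0" "f \<in> RC l E"
  shows "smooth_on T f"
  by (rule closed_class_smooth[where F="RC l E"]) (use RC_closed assms in blast)+


lemma cs: "r *\<^sub>R (c::complex) = of_real r * c" by (simp add: scaleR_conv_of_real)
lemma vsc: "(r *\<^sub>R (x::complex^'n)) $ i = r *\<^sub>R (x $ i)" by simp
lemma axsum: "(\<Sum>i'\<in>UNIV. axis i (1::complex) $ i' * t $ i') = t $ i"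
  by (simp add: axis_def if_distrib[of "\<lambda>x. x * _"] cong: if_cong)

lemma lin_bl: "linear (f :: 'a::euclidean_space \<Rightarrow> 'b::real_normed_vector) \<Longrightarrow> bounded_linear f"
  using linear_conv_bounded_linear by blast

lemma ffun_bl: "bounded_linear (ffun B j)"
  apply (rule lin_bl, rule linearI)
  by (simp_all add: ffun_def gfun_def sum.distrib algebra_simps cs vsc sum_distrib_left)

lemma bl1: "bounded_linear (\<lambda>w::complex. ((0::complex^'n), (\<chi> i::'m::finite. if i = j then w else 0)))"
  apply (rule lin_bl, rule linearI)
  by (simp_all add: vec_eq_iff)

lemma bl2: "bounded_linear (\<lambda>z::((complex^'n) \<times> (complex^'m::finite)). (fst z, (0::complex^'p::finite)))"
  apply (rule lin_bl, rule linearI)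
  by (simp_all add: vec_eq_iff)

lemma bl3: "bounded_linear (\<lambda>w::complex. ((0::complex^'n), (\<chi> i::'m::finite. c i * w)))"
  apply (rule lin_bl, rule linearI)
  by (simp_all add: vec_eq_iff algebra_simps cs vsc)

lemma bl4: "bounded_linear (\<lambda>z::((complex^'n) \<times> (complex^'m::finite)). (fst z, (\<chi> i::'p::finite. - (\<Sum>j\<in>UNIV. c i j * fst z $ j))))"
  apply (rule lin_bl, rule linearI)
  by (simp_all add: vec_eq_iff algebra_simps cs vsc sum.distrib sum_distrib_left)

lemma bl5: "bounded_linear (\<lambda>z::((complex^'n) \<times> (complex^'m::finite)). snd z $ j)"
  apply (rule lin_bl, rule linearI)
  by (simp_all)

lemma open_nz:
  fixes f :: "'i::finite \<Rightarrow> 'a::real_normed_vector \<Rightarrow> complex"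
  assumes "\<And>j. bounded_linear (f j)"
  shows "open {z. \<forall>j. f j z \<noteq> 0}"
proof -
  have "{z. \<forall>j. f j z \<noteq> 0} = (\<Inter>j\<in>UNIV. {z. f j z \<noteq> 0})" by auto
  moreover have "open {z. f j z \<noteq> 0}" for j
    by (rule open_Collect_neq) (auto intro: linear_continuous_on assms continuous_on_const)
  ultimately show ?thesis by (auto intro: open_INT)
qed

theorem theorem4p5:
  fixes B :: "complex^'k^'n" and a :: "complex^'n"
  assumes "0 < CARD('k)" and "CARD('k) < CARD('n)"
    and "\<forall>j. \<exists>i. B $ j $ i \<noteq> 0"
    and span: "g_span_dual B"
    and anz: "\<forall>j. a $ j \<noteq> 0"
    and "\<forall>j. \<not> (Y_perp B \<subseteq> {p. p $ j = 0})"
    and "crit_set B a \<noteq> {}"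
  shows "diffeomorphism_onto (Psi_map B a) (crit_set B a) (L_Ya B a)"
proof -
  have "\<forall>i. \<exists>lam::complex^'n. \<forall>t::complex^'k. t $ i = (\<Sum>j\<in>UNIV. lam $ j * gfun B j t)"
  proof
    fix i :: 'k
    obtain lam :: "complex^'n" where "\<forall>t. (\<Sum>i'\<in>UNIV. axis i 1 $ i' * t $ i') = (\<Sum>j\<in>UNIV. lam $ j * gfun B j t)"
      using span unfolding g_span_dual_def by blast
    then show "\<exists>lam::complex^'n. \<forall>t::complex^'k. t $ i = (\<Sum>j\<in>UNIV. lam $ j * gfun B j t)"
      by (auto simp: axsum)
  qed
  then obtain Lam :: "'k \<Rightarrow> complex^'n" where Lam: "\<And>i t. t $ i = (\<Sum>j\<in>UNIV. Lam i $ j * gfun B j t)"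
    by metis
  define S where "S = crit_set B a"
  define Lt where "Lt = L_Ya B a"
  define psi where "psi = (\<lambda>z::(complex^'n) \<times> (complex^'n). (fst z, (\<chi> i. \<Sum>j\<in>UNIV. Lam i $ j * (a $ j / snd z $ j - fst z $ j))))"
  have perp: "(\<Sum>j\<in>UNIV. B $ j $ i * p $ j) = 0" if "p \<in> Y_perp B" for p i
  proof -
    have "(\<chi> j. \<Sum>i'\<in>UNIV. axis i 1 $ i' * B $ j $ i') \<in> Y_sp B" unfolding Y_sp_def by blast
    with that have "(\<Sum>j\<in>UNIV. p $ j * (\<chi> j. \<Sum>i'\<in>UNIV. axis i 1 $ i' * B $ j $ i') $ j) = 0"
      unfolding Y_perp_def by blast
    then show ?thesis by (simp add: axsum mult.commute)
  qed
  have left: "psi (Psi_map B a z) = z" if "z \<in> S" for z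
  proof -
    have nz: "ffun B j z \<noteq> 0" for j using that unfolding S_def crit_set_def U_A_def by auto
    have "(\<Sum>j\<in>UNIV. Lam i $ j * (a $ j / (a $ j / ffun B j z) - fst z $ j)) = snd z $ i" for i
      using nz anz by (simp add: Lam[of "snd z" i] ffun_def)
    then show ?thesis by (simp add: psi_def Psi_map_def vec_eq_iff prod_eq_iff)
  qed
  have img1: "Psi_map B a z \<in> Lt" if "z \<in> S" for z
  proof -
    have nz: "ffun B j z \<noteq> 0" for j using that unfolding S_def crit_set_def U_A_def by auto
    have cr: "(\<Sum>j\<in>UNIV. B $ j $ i * a $ j / ffun B j z) = 0" for i
      using that unfolding S_def crit_set_def by auto
    define p where "p = (\<chi> j. a $ j / ffun B j z)"
    define q where "q = (\<chi> j. \<Sum>i\<in>UNIV. (- snd z) $ i * B $ j $ i)"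
    have q: "q \<in> Y_sp B" unfolding Y_sp_def q_def by blast
    have p: "p \<in> Y_perp B" unfolding Y_perp_def mem_Collect_eq
    proof (intro ballI)
      fix q' assume "q' \<in> Y_sp B"
      then obtain t where t: "q' = (\<chi> j. \<Sum>i\<in>UNIV. t $ i * B $ j $ i)" unfolding Y_sp_def by blast
      have "(\<Sum>j\<in>UNIV. p $ j * q' $ j) = (\<Sum>j\<in>UNIV. \<Sum>i\<in>UNIV. t $ i * (B $ j $ i * a $ j / ffun B j z))"
        by (simp add: t p_def sum_distrib_left algebra_simps)
      also have "\<dots> = (\<Sum>i\<in>UNIV. t $ i * (\<Sum>j\<in>UNIV. B $ j $ i * a $ j / ffun B j z))"
        by (subst sum.swap) (simp add: sum_distrib_left)
      also have "\<dots> = 0" using cr by simp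
      finally show "(\<Sum>j\<in>UNIV. p $ j * q' $ j) = 0" .
    qed
    have pnz: "\<forall>j. p $ j \<noteq> 0" using nz anz by (simp add: p_def)
    have "Psi_map B a z = r_map a (q, p)"
      using nz anz by (simp add: Psi_map_def r_map_def p_def q_def vec_eq_iff ffun_def gfun_def mult.commute sum_negf)
    then show ?thesis unfolding Lt_def L_Ya_def using q p pnz by blast
  qed
  have right: "Psi_map B a (psi y) = y" and img2: "psi y \<in> S" if yL: "y \<in> Lt" for y
  proof -
    obtain q p where q: "q \<in> Y_sp B" and p: "p \<in> Y_perp B" and pnz: "\<forall>j. p $ j \<noteq> 0" and y: "y = r_map a (q, p)"
      using yL unfolding Lt_def L_Ya_def by blast
    obtain t where t: "q = (\<chi> j. \<Sum>i\<in>UNIV. t $ i * B $ j $ i)" using q unfolding Y_sp_def by blast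
    have qg: "q $ j = gfun B j t" for j by (simp add: t gfun_def mult.commute)
    have snd: "snd (psi y) = - t"
    proof -
      have "(\<Sum>j\<in>UNIV. Lam i $ j * (a $ j / p $ j - (q $ j + a $ j / p $ j))) = - t $ i" for i
        using Lam[of t i] by (simp add: qg sum_negf)
      then show ?thesis by (simp add: psi_def y r_map_def vec_eq_iff)
    qed
    have gneg: "gfun B j (- t) = - gfun B j t" for j by (simp add: gfun_def sum_negf)
    have ff: "ffun B j (psi y) = a $ j / p $ j" for j
      by (simp add: ffun_def snd gneg) (simp add: psi_def y r_map_def qg)
    have "a $ j / ffun B j (psi y) = p $ j" for j using anz pnz by (simp add: ff)
    then show "Psi_map B a (psi y) = y"
      by (simp add: Psi_map_def y r_map_def vec_eq_iff) (simp add: psi_def r_map_def)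
    show "psi y \<in> S"
      unfolding S_def crit_set_def U_A_def
      using ff anz pnz perp[OF p] by (simp add: mult.assoc)
  qed
  have bij: "bij_betw (Psi_map B a) S Lt"
    by (rule bij_betw_byWitness[where f'=psi]) (use left right img1 img2 in auto)
  have inj: "inj_on (Psi_map B a) S" using bij bij_betw_def by blast
  have inveq: "inv_into S (Psi_map B a) y = psi y" if "y \<in> Lt" for y
    by (rule inv_into_f_eq[OF inj img2[OF that] right[OF that]])
  have oU: "open (U_A B)" unfolding U_A_def by (rule open_nz[OF ffun_bl])
  have SU: "S \<subseteq> U_A B" unfolding S_def crit_set_def by auto
  have PsiRC: "Psi_map B a \<in> RC (ffun B) (\<lambda>j w. ((0::complex^'n), (\<chi> i. if i = j then w else 0)))"
    unfolding RC_def
  proof (intro CollectI exI conjI)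
    show "bounded_linear (\<lambda>z::(complex^'n) \<times> (complex^'k). (fst z, (0::complex^'n)))" by (rule bl2)
    show "Psi_map B a = (\<lambda>z. (fst z, 0) + 0 + (\<Sum>j\<in>UNIV. ((0::complex^'n), (\<chi> i. if i = j then poly [:0, a $ j:] (inverse (ffun B j z)) else 0))))"
      by (auto simp: fun_eq_iff Psi_map_def vec_eq_iff sum_prod divide_inverse if_distrib[of "\<lambda>x. x $ _"] cong: if_cong)
  qed
  have sm1: "smooth_on (U_A B) (Psi_map B a)"
    by (rule RC_smooth[OF ffun_bl bl1 _ PsiRC]) (auto simp: U_A_def)
  define T2 where "T2 = {z::(complex^'n) \<times> (complex^'n). \<forall>j. snd z $ j \<noteq> 0}"
  have oT2: "open T2" unfolding T2_def by (rule open_nz[OF bl5])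
  have LT2: "Lt \<subseteq> T2" unfolding Lt_def L_Ya_def T2_def r_map_def by auto
  have psiRC: "psi \<in> RC (\<lambda>j z. snd z $ j) (\<lambda>j w. ((0::complex^'n), (\<chi> i. (Lam i $ j * a $ j) * w)))"
    unfolding RC_def
  proof (intro CollectI exI conjI)
    show "bounded_linear (\<lambda>z::(complex^'n) \<times> (complex^'n). (fst z, (\<chi> i::'k. - (\<Sum>j\<in>UNIV. Lam i $ j * fst z $ j))))" by (rule bl4)
    show "psi = (\<lambda>z. (fst z, (\<chi> i::'k. - (\<Sum>j\<in>UNIV. Lam i $ j * fst z $ j))) + 0 + (\<Sum>j\<in>UNIV. ((0::complex^'n), (\<chi> i. (Lam i $ j * a $ j) * poly [:0, 1:] (inverse (snd z $ j))))))"
      by (auto simp: fun_eq_iff psi_def vec_eq_iff sum_prod divide_inverse algebra_simps sum_subtractf sum_negf)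
  qed
  have sm2: "smooth_on T2 psi"
    by (rule RC_smooth[OF bl5 bl3 _ psiRC]) (auto simp: T2_def)
  have "smooth_map_on S (Psi_map B a)"
    unfolding smooth_map_on_def using oU SU sm1 by blast
  moreover have "smooth_map_on Lt (inv_into S (Psi_map B a))"
    unfolding smooth_map_on_def using oT2 LT2 sm2 inveq by blast
  ultimately show ?thesis using bij unfolding diffeomorphism_onto_def S_def Lt_def by blast
qed

end
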